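(* Let $G$ be a finite cyclic group and $S$ a nonempty subset of $G$ such that $\Gamma=\mathrm{Cay}(G,S)$ is a connected arc-transitive normal Cayley digraph. Then every element of $S$ generates $G$, and $\mathrm{Aut}(G,S)$ acts regularly on $S$.
   Context: The Cayley digraph $\mathrm{Cay}(G,S)$ has vertex set $G$, with $x$ pointing to $y$ iff $yx^{-1}\in S$. For $g\in G$, $\widehat g$ is the permutation $x\mapsto xg$ of $G$, and $\widehat G=\{\widehat g: g\in G\}\leqslant\mathrm{Aut}(\mathrm{Cay}(G,S))$. The Cayley digraph is normal if $\widehat G$ is normal in $\mathrm{Aut}(\mathrm{Cay}(G,S))$. $\mathrm{Aut}(G,S)=\{\alpha\in\mathrm{Aut}(G): S^\alpha=S\}$. A digraph is connected if its underlying undirected graph is connected and arc-transitive if its automorphism group is transitive on its arcs. *)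

theory Defs
  imports "HOL-Algebra.Algebra"
begin

definition cay_arc :: "('a, 'b) monoid_scheme \<Rightarrow> 'a set \<Rightarrow> 'a \<Rightarrow> 'a \<Rightarrow> bool" where
  "cay_arc G S x y \<longleftrightarrow> x \<in> carrier G \<and> y \<in> carrier G \<and> y \<otimes>\<^bsub>G\<^esub> inv\<^bsub>G\<^esub> x \<in> S"

definition cay_aut :: "('a, 'b) monoid_scheme \<Rightarrow> 'a set \<Rightarrow> ('a \<Rightarrow> 'a) set" where
  "cay_aut G S = {\<sigma> \<in> Bij (carrier G).
     \<forall>x \<in> carrier G. \<forall>y \<in> carrier G. cay_arc G S x y \<longleftrightarrow> cay_arc G S (\<sigma> x) (\<sigma> y)}"

definition CayAutGroup :: "('a, 'b) monoid_scheme \<Rightarrow> 'a set \<Rightarrow> ('a \<Rightarrow> 'a) monoid" where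
  "CayAutGroup G S = (BijGroup (carrier G))\<lparr>carrier := cay_aut G S\<rparr>"

definition right_transl :: "('a, 'b) monoid_scheme \<Rightarrow> 'a \<Rightarrow> 'a \<Rightarrow> 'a" where
  "right_transl G g = (\<lambda>x \<in> carrier G. x \<otimes>\<^bsub>G\<^esub> g)"

definition right_regular :: "('a, 'b) monoid_scheme \<Rightarrow> ('a \<Rightarrow> 'a) set" where
  "right_regular G = right_transl G ` carrier G"

definition normal_cayley :: "('a, 'b) monoid_scheme \<Rightarrow> 'a set \<Rightarrow> bool" where
  "normal_cayley G S \<longleftrightarrow> right_regular G \<lhd> CayAutGroup G S"

definition cay_connected :: "('a, 'b) monoid_scheme \<Rightarrow> 'a set \<Rightarrow> bool" where
  "cay_connected G S \<longleftrightarrow>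
     (\<forall>x \<in> carrier G. \<forall>y \<in> carrier G.
        (x, y) \<in> ({(u, v). cay_arc G S u v} \<union> {(u, v). cay_arc G S v u})\<^sup>*)"

definition cay_arc_transitive :: "('a, 'b) monoid_scheme \<Rightarrow> 'a set \<Rightarrow> bool" where
  "cay_arc_transitive G S \<longleftrightarrow>
     (\<forall>x y x' y'. cay_arc G S x y \<longrightarrow> cay_arc G S x' y' \<longrightarrow>
        (\<exists>\<sigma> \<in> cay_aut G S. \<sigma> x = x' \<and> \<sigma> y = y'))"

definition aut_GS :: "('a, 'b) monoid_scheme \<Rightarrow> 'a set \<Rightarrow> ('a \<Rightarrow> 'a) set" where
  "aut_GS G S = {\<alpha> \<in> auto G. \<alpha> ` S = S}"

definition acts_regularly_on :: "('a \<Rightarrow> 'a) set \<Rightarrow> 'a set \<Rightarrow> bool" where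
  "acts_regularly_on A T \<longleftrightarrow> (\<forall>s \<in> T. \<forall>t \<in> T. \<exists>!\<alpha>. \<alpha> \<in> A \<and> \<alpha> s = t)"

end

theory Submission imports Defs begin

lemma (in group) arc_one: "S \<subseteq> carrier G \<Longrightarrow> cay_arc G S \<one> y \<longleftrightarrow> y \<in> S"
  by (auto simp: cay_arc_def)

lemma (in group) cyc_pow:
  assumes "cyclic_group G" "\<alpha> \<in> hom G G"
  shows "\<exists>k::int. \<forall>x\<in>carrier G. \<alpha> x = x [^] k"
proof -
  obtain g where g: "g \<in> carrier G" "carrier G = range (\<lambda>n::int. g [^] n)"
    using assms(1) cyclic_group by blast
  have "\<alpha> g \<in> carrier G" using assms(2) g(1) by (auto simp: hom_def)
  then obtain k where k: "\<alpha> g = g [^] (k::int)" using g(2) by auto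
  have "\<forall>x\<in>carrier G. \<alpha> x = x [^] k"
  proof
    fix x assume "x \<in> carrier G"
    then obtain n where n: "x = g [^] (n::int)" using g(2) by auto
    have "\<alpha> x = (\<alpha> g) [^] n" using n hom_int_pow[OF assms(2) g(1) is_group is_group] by simp
    also have "\<dots> = g [^] (k * n)" using k int_pow_pow g(1) by simp
    also have "\<dots> = x [^] k" using n int_pow_pow g(1) by (simp add: mult.commute)
    finally show "\<alpha> x = x [^] k" .
  qed
  then show ?thesis by blast
qed

lemma (in group) cyc_comm:
  assumes "cyclic_group G" "\<alpha> \<in> hom G G" "\<beta> \<in> hom G G" "x \<in> carrier G"
  shows "\<alpha> (\<beta> x) = \<beta> (\<alpha> x)"
proof -
  obtain a where a: "\<forall>x\<in>carrier G. \<alpha> x = x [^] (a::int)" using cyc_pow assms by blast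
  obtain b where b: "\<forall>x\<in>carrier G. \<beta> x = x [^] (b::int)" using cyc_pow assms by blast
  show ?thesis using a b assms(4) int_pow_pow by (simp add: mult.commute)
qed

lemma (in group) hom_agree:
  assumes "\<alpha> \<in> hom G G" "\<beta> \<in> hom G G" "A \<subseteq> carrier G" "\<forall>x\<in>A. \<alpha> x = \<beta> x"
    and "x \<in> generate G A"
  shows "\<alpha> x = \<beta> x"
  using assms(5)
proof (induction rule: generate.induct)
  case one
  then show ?case using assms(1,2) hom_one[OF assms(1) is_group is_group]
     hom_one[OF assms(2) is_group is_group] by simp
next
  case (incl h) then show ?case using assms(4) by auto
next
  case (inv h)
  have "h \<in> carrier G" using inv assms(3) by auto
  then show ?case using inv assms group_hom.hom_inv[of G G \<alpha> h] group_hom.hom_inv[of G G \<beta> h]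
    by (simp add: group_hom_def group_hom_axioms_def is_group)
next
  case (eng h1 h2)
  have "h1 \<in> carrier G" "h2 \<in> carrier G" using eng generate_incl assms(3) by auto
  then show ?case using eng assms(1,2) by (simp add: hom_mult)
qed

lemma (in group) gen_S:
  assumes "S \<subseteq> carrier G" "cay_connected G S"
  shows "generate G S = carrier G"
proof
  show "generate G S \<subseteq> carrier G" using generate_incl assms(1) .
  show "carrier G \<subseteq> generate G S"
  proof
    fix y assume y: "y \<in> carrier G"
    have "(\<one>, y) \<in> ({(u, v). cay_arc G S u v} \<union> {(u, v). cay_arc G S v u})\<^sup>*"
      using assms(2) y by (auto simp: cay_connected_def)
    then show "y \<in> generate G S"
    proof (induction rule: rtrancl_induct)
      case base then show ?case by (rule generate.one)
    next
      case (step x z)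
      then have x: "x \<in> carrier G" "z \<in> carrier G" by (auto simp: cay_arc_def)
      from step(2) show ?case
      proof
        assume "(x, z) \<in> {(u, v). cay_arc G S u v}"
        then have s: "z \<otimes> inv x \<in> S" by (auto simp: cay_arc_def)
        have "z = (z \<otimes> inv x) \<otimes> x" using x by (simp add: m_assoc)
        then show ?thesis using generate.eng[OF generate.incl[OF s] step(3)] by simp
      next
        assume "(x, z) \<in> {(u, v). cay_arc G S v u}"
        then have s: "x \<otimes> inv z \<in> S" by (auto simp: cay_arc_def)
        have "z = inv (x \<otimes> inv z) \<otimes> x" using x by (simp add: m_assoc inv_mult_group)
        then show ?thesis using generate.eng[OF generate.inv[OF s] step(3)] by simp
      qed
    qed
  qed
qed

lemma (in group) stab_auto:
  assumes "S \<subseteq> carrier G" "normal_cayley G S" "\<sigma> \<in> cay_aut G S" "\<sigma> \<one> = \<one>"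
  shows "\<sigma> \<in> aut_GS G S"
proof -
  let ?K = "CayAutGroup G S" and ?H = "right_regular G"
  have N: "normal ?H ?K" using assms(2) by (simp add: normal_cayley_def)
  have cK: "carrier ?K = cay_aut G S" by (simp add: CayAutGroup_def)
  have sB: "\<sigma> \<in> Bij (carrier G)" using assms(3) by (simp add: cay_aut_def)
  have HB: "?H \<subseteq> Bij (carrier G)" using subgroup.subset[OF normal.axioms(1)[OF N]] cK
    by (auto simp: cay_aut_def)
  have sbij: "bij_betw \<sigma> (carrier G) (carrier G)" using sB by (simp add: Bij_def)
  have sc: "\<And>x. x \<in> carrier G \<Longrightarrow> \<sigma> x \<in> carrier G" using bij_betw_apply[OF sbij] .
  have key: "\<sigma> (z \<otimes> y) = \<sigma> z \<otimes> \<sigma> y" if y: "y \<in> carrier G" and z: "z \<in> carrier G" for y z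
  proof -
    have gH: "right_transl G y \<in> ?H" using y by (simp add: right_regular_def)
    have "\<sigma> \<otimes>\<^bsub>?K\<^esub> right_transl G y \<in> \<sigma> <#\<^bsub>?K\<^esub> ?H"
      using gH unfolding l_coset_def by blast
    also have "\<dots> = ?H #>\<^bsub>?K\<^esub> \<sigma>"
    proof -
      have "\<sigma> \<in> carrier ?K" using assms(3) cK by simp
      then show ?thesis using normal.coset_eq[OF N] by blast
    qed
    finally obtain h where h: "h \<in> carrier G"
      and eq: "\<sigma> \<otimes>\<^bsub>?K\<^esub> right_transl G y = right_transl G h \<otimes>\<^bsub>?K\<^esub> \<sigma>"
      unfolding r_coset_def right_regular_def by blast
    have gB: "right_transl G y \<in> Bij (carrier G)" "right_transl G h \<in> Bij (carrier G)"
      using HB y h by (auto simp: right_regular_def)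
    have "\<And>w. w \<in> carrier G \<Longrightarrow> \<sigma> (w \<otimes> y) = \<sigma> w \<otimes> h"
    proof -
      fix w assume w: "w \<in> carrier G"
      have "(\<sigma> \<otimes>\<^bsub>?K\<^esub> right_transl G y) w = (right_transl G h \<otimes>\<^bsub>?K\<^esub> \<sigma>) w" using eq by simp
      then show "\<sigma> (w \<otimes> y) = \<sigma> w \<otimes> h"
        using w sB gB sc[OF w]
        by (simp add: CayAutGroup_def BijGroup_def compose_def right_transl_def)
    qed
    from this[of \<one>] this[of z] y z h assms(4) show ?thesis by simp
  qed
  have hom: "\<sigma> \<in> hom G G" using key sc by (auto simp: hom_def)
  have img: "\<sigma> ` S = S"
  proof
    show "\<sigma> ` S \<subseteq> S"
    proof
      fix t assume "t \<in> \<sigma> ` S"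
      then obtain y where y: "y \<in> S" "t = \<sigma> y" by auto
      have "cay_arc G S \<one> y" using y assms(1) arc_one by auto
      then have "cay_arc G S (\<sigma> \<one>) (\<sigma> y)" using assms(3) y assms(1) by (auto simp: cay_aut_def)
      then show "t \<in> S" using y assms(4) arc_one[OF assms(1)] by simp
    qed
    show "S \<subseteq> \<sigma> ` S"
    proof
      fix t assume t: "t \<in> S"
      then obtain y where y: "y \<in> carrier G" "t = \<sigma> y" using sbij assms(1)
        unfolding bij_betw_def by blast
      have "cay_arc G S (\<sigma> \<one>) (\<sigma> y)" using t y assms(1,4) arc_one by simp
      then have "cay_arc G S \<one> y" using assms(3) y by (auto simp: cay_aut_def)
      then show "t \<in> \<sigma> ` S" using y arc_one[OF assms(1)] by auto
    qed
  qed
  show ?thesis using hom sB img by (simp add: aut_GS_def auto_def)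
qed

lemma (in group) trans_S:
  assumes "S \<subseteq> carrier G" "normal_cayley G S" "cay_arc_transitive G S" "s \<in> S" "t \<in> S"
  shows "\<exists>\<sigma> \<in> aut_GS G S. \<sigma> s = t"
proof -
  have "cay_arc G S \<one> s" "cay_arc G S \<one> t" using assms(4,5) arc_one[OF assms(1)] by auto
  then obtain \<sigma> where "\<sigma> \<in> cay_aut G S" "\<sigma> \<one> = \<one>" "\<sigma> s = t"
    using assms(3) unfolding cay_arc_transitive_def by blast
  then show ?thesis using stab_auto[OF assms(1) assms(2)] by blast
qed

lemma (in group) main_lemma:
  assumes "finite (carrier G)" and "cyclic_group G"
    and "S \<subseteq> carrier G" and "S \<noteq> {}"
    and "cay_connected G S" and "cay_arc_transitive G S" and "normal_cayley G S"
  shows "(\<forall>s \<in> S. generate G {s} = carrier G) \<and> acts_regularly_on (aut_GS G S) S"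
proof -
  have gS: "generate G S = carrier G" using gen_S[OF assms(3) assms(5)] .
  have homA: "\<And>\<alpha>. \<alpha> \<in> aut_GS G S \<Longrightarrow> \<alpha> \<in> hom G G" by (simp add: aut_GS_def auto_def)
  have part1: "generate G {s} = carrier G" if s: "s \<in> S" for s
  proof
    have sc: "{s} \<subseteq> carrier G" using s assms(3) by auto
    show "generate G {s} \<subseteq> carrier G" using generate_incl[OF sc] .
    have "S \<subseteq> generate G {s}"
    proof
      fix t assume t: "t \<in> S"
      obtain \<sigma> where \<sigma>: "\<sigma> \<in> aut_GS G S" "\<sigma> s = t" using trans_S[OF assms(3) assms(7) assms(6) s t] by blast
      obtain k where k: "\<forall>x\<in>carrier G. \<sigma> x = x [^] (k::int)" using cyc_pow assms(2) homA[OF \<sigma>(1)] by blast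
      have "t = s [^] k" using k \<sigma>(2) sc by auto
      then show "t \<in> generate G {s}"
        using subgroup_int_pow_closed[OF generate_is_subgroup[OF sc]] generate.incl[of s "{s}" G] by simp
    qed
    then have "generate G S \<subseteq> generate G {s}"
      using generate_subgroup_incl generate_is_subgroup[OF sc] by blast
    then show "carrier G \<subseteq> generate G {s}" using gS by simp
  qed
  have part2: "acts_regularly_on (aut_GS G S) S"
    unfolding acts_regularly_on_def
  proof (intro ballI)
    fix s t assume s: "s \<in> S" and t: "t \<in> S"
    obtain \<alpha> where \<alpha>: "\<alpha> \<in> aut_GS G S" "\<alpha> s = t" using trans_S[OF assms(3) assms(7) assms(6) s t] by blast
    show "\<exists>!\<alpha>. \<alpha> \<in> aut_GS G S \<and> \<alpha> s = t"
    proof (rule ex1I[of _ \<alpha>])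
      show "\<alpha> \<in> aut_GS G S \<and> \<alpha> s = t" using \<alpha> by simp
      fix \<beta> assume \<beta>: "\<beta> \<in> aut_GS G S \<and> \<beta> s = t"
      have agree: "\<forall>u\<in>S. \<beta> u = \<alpha> u"
      proof
        fix u assume u: "u \<in> S"
        obtain \<delta> where \<delta>: "\<delta> \<in> aut_GS G S" "\<delta> s = u" using trans_S[OF assms(3) assms(7) assms(6) s u] by blast
        have sc: "s \<in> carrier G" using s assms(3) by auto
        have "\<beta> u = \<delta> (\<beta> s)" using cyc_comm[OF assms(2) homA[OF \<delta>(1)] homA[OF conjunct1[OF \<beta>]] sc] \<delta>(2) by simp
        also have "\<dots> = \<delta> (\<alpha> s)" using \<alpha> \<beta> by simp
        also have "\<dots> = \<alpha> u" using cyc_comm[OF assms(2) homA[OF \<delta>(1)] homA[OF \<alpha>(1)] sc] \<delta>(2) by simp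
        finally show "\<beta> u = \<alpha> u" .
      qed
      have all: "\<forall>x\<in>carrier G. \<beta> x = \<alpha> x"
        using hom_agree[OF homA[OF conjunct1[OF \<beta>]] homA[OF \<alpha>(1)] assms(3) agree] gS by auto
      have "\<alpha> \<in> extensional (carrier G)" "\<beta> \<in> extensional (carrier G)"
        using \<alpha> \<beta> by (auto simp: aut_GS_def auto_def Bij_def)
      then show "\<beta> = \<alpha>" using all by (auto intro: extensionalityI)
    qed
  qed
  show ?thesis using part1 part2 by blast
qed

theorem lemma3p2:
  fixes G :: "('a, 'b) monoid_scheme" and S :: "'a set"
  assumes "group G" and "finite (carrier G)" and "cyclic_group G"
    and "S \<subseteq> carrier G" and "S \<noteq> {}"
    and "cay_connected G S" and "cay_arc_transitive G S" and "normal_cayley G S"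
  shows "(\<forall>s \<in> S. generate G {s} = carrier G) \<and> acts_regularly_on (aut_GS G S) S"
  using group.main_lemma[OF assms] .

end
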